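(* Let $\rho_1$ be a ray of $C_{6,2}$ of type $(3,3)$ with labeling $O_1=\{J_1,J_2\}$ and $\rho_2$ a ray of type $(2,2,2)$ with labeling $O_2=\{I_1,I_2,I_3\}$, and let $\tau$ be the 2-face of $C_{6,2}$ spanned by $\rho_1$ and $\rho_2$. If $O_2\preccurlyeq O_1$, then $\tau\subseteq\Phi(\mathcal Z_2^6)$. Otherwise $\tau\cap\Phi(\mathcal Z_2^6)=\rho_1\cup\rho_2$.
   Context: $\mathcal Z_2$ is the set of zonoids in $\mathbb R^2$. For $Z=(Z_1,\dots,Z_6)\in\mathcal Z_2^6$ let $\mathrm V_{ij}=\mathrm V(Z_i,Z_j)$ be the mixed area, and $\Phi(Z)\in\mathbb R^{15}$ the vector with coordinates $\mathrm V_{I_1}\mathrm V_{I_2}\mathrm V_{I_3}$ indexed by all partitions of $[6]$ into pairs. $C_{6,2}$ is the conic hull of $\Phi(\mathcal Z_2^6)$ (a polyhedral cone in which any two extreme rays span a 2-face). For a 6-tuple $U$ of nonzero vectors in $\mathbb R^2$, $\Phi(U)=\Phi([0,u_1],\dots,[0,u_6])$. A ray of type $(3,3)$ with labeling $\{J_1,J_2\}$ is the ray spanned by $\Phi(U)$, where $[6]=J_1\sqcup J_2$, $|J_1|=|J_2|=3$, the vectors indexed by $J_1$ are pairwise parallel, those indexed by $J_2$ are pairwise parallel, and vectors from different parts are non-parallel. A ray of type $(2,2,2)$ with labeling $\{I_1,I_2,I_3\}$ is the ray spanned by $\Phi(U)$ where $[6]=I_1\sqcup I_2\sqcup I_3$,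 $|I_r|=2$, vectors in the same part are parallel and vectors in different parts are non-parallel. We write $O_2\preccurlyeq O_1$ if $I_i\subseteq J_j$ for some $i\in\{1,2,3\}$ and $j\in\{1,2\}$. *)

theory Defs
  imports "HOL-Analysis.Analysis"
begin

type_synonym vec2 = "real^2"

definition minksum :: "vec2 set \<Rightarrow> vec2 set \<Rightarrow> vec2 set" where
  "minksum A B = {a + b | a b. a \<in> A \<and> b \<in> B}"

definition zonotope :: "vec2 set \<Rightarrow> bool" where
  "zonotope P \<longleftrightarrow> (\<exists>segs :: (vec2 \<times> vec2) list.
      P = foldr (\<lambda>s acc. minksum (closed_segment (fst s) (snd s)) acc) segs {0})"

definition hausdist :: "vec2 set \<Rightarrow> vec2 set \<Rightarrow> real" where
  "hausdist S T = max (SUP x\<in>S. infdist x T) (SUP y\<in>T. infdist y S)"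

definition zonoid :: "vec2 set \<Rightarrow> bool" where
  "zonoid Z \<longleftrightarrow> compact Z \<and> Z \<noteq> {} \<and>
     (\<exists>P :: nat \<Rightarrow> vec2 set. (\<forall>n. zonotope (P n)) \<and> (\<lambda>n. hausdist (P n) Z) \<longlonglongrightarrow> 0)"

definition area :: "vec2 set \<Rightarrow> real" where
  "area K = measure lebesgue K"

text \<open>Mixed area, normalized so that mixed_area K K = area K.\<close>
definition mixed_area :: "vec2 set \<Rightarrow> vec2 set \<Rightarrow> real" where
  "mixed_area K L = (area (minksum K L) - area K - area L) / 2"

definition pairings6 :: "nat set set set" where
  "pairings6 = {P. \<Union>P = {1..6} \<and> (\<forall>B\<in>P. card B = 2) \<and>
                    (\<forall>B\<in>P. \<forall>C\<in>P. B \<noteq> C \<longrightarrow> B \<inter> C = {})}"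

text \<open>The map Phi, with coordinates indexed by pairings of [6] (value 0 off the index set).\<close>
definition Phi :: "(nat \<Rightarrow> vec2 set) \<Rightarrow> nat set set \<Rightarrow> real" where
  "Phi Z P = (if P \<in> pairings6 then (\<Prod>B\<in>P. mixed_area (Z (Min B)) (Z (Max B))) else 0)"

definition PhiU :: "(nat \<Rightarrow> vec2) \<Rightarrow> nat set set \<Rightarrow> real" where
  "PhiU U = Phi (\<lambda>i. closed_segment 0 (U i))"

definition Phi_image :: "(nat set set \<Rightarrow> real) set" where
  "Phi_image = {Phi Z | Z. \<forall>i\<in>{1..6::nat}. zonoid (Z i)}"

definition parallel :: "vec2 \<Rightarrow> vec2 \<Rightarrow> bool" where
  "parallel u v \<longleftrightarrow> (\<exists>c. u = c *\<^sub>R v)"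

definition type33 :: "(nat \<Rightarrow> vec2) \<Rightarrow> nat set \<Rightarrow> nat set \<Rightarrow> bool" where
  "type33 U J1 J2 \<longleftrightarrow> (\<forall>i\<in>{1..6}. U i \<noteq> 0) \<and>
     J1 \<union> J2 = {1..6} \<and> J1 \<inter> J2 = {} \<and> card J1 = 3 \<and> card J2 = 3 \<and>
     (\<forall>J\<in>{J1, J2}. \<forall>i\<in>J. \<forall>j\<in>J. parallel (U i) (U j)) \<and>
     (\<forall>i\<in>J1. \<forall>j\<in>J2. \<not> parallel (U i) (U j))"

definition type222 :: "(nat \<Rightarrow> vec2) \<Rightarrow> nat set \<Rightarrow> nat set \<Rightarrow> nat set \<Rightarrow> bool" where
  "type222 U I1 I2 I3 \<longleftrightarrow> (\<forall>i\<in>{1..6}. U i \<noteq> 0) \<and>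
     I1 \<union> I2 \<union> I3 = {1..6} \<and> I1 \<inter> I2 = {} \<and> I1 \<inter> I3 = {} \<and> I2 \<inter> I3 = {} \<and>
     card I1 = 2 \<and> card I2 = 2 \<and> card I3 = 2 \<and>
     (\<forall>I\<in>{I1, I2, I3}. \<forall>i\<in>I. \<forall>j\<in>I. parallel (U i) (U j)) \<and>
     (\<forall>I\<in>{I1, I2, I3}. \<forall>I'\<in>{I1, I2, I3}. I \<noteq> I' \<longrightarrow>
        (\<forall>i\<in>I. \<forall>j\<in>I'. \<not> parallel (U i) (U j)))"

definition labeling_prec :: "nat set \<Rightarrow> nat set \<Rightarrow> nat set \<Rightarrow> nat set \<Rightarrow> nat set \<Rightarrow> bool" where
  "labeling_prec I1 I2 I3 J1 J2 \<longleftrightarrow> (\<exists>I\<in>{I1, I2, I3}. \<exists>J\<in>{J1, J2}. I \<subseteq> J)"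

definition ray_of :: "(nat set set \<Rightarrow> real) \<Rightarrow> (nat set set \<Rightarrow> real) set" where
  "ray_of x = {(\<lambda>P. a * x P) | a. a \<ge> 0}"

definition cone2 :: "(nat set set \<Rightarrow> real) \<Rightarrow> (nat set set \<Rightarrow> real) \<Rightarrow> (nat set set \<Rightarrow> real) set" where
  "cone2 x y = {(\<lambda>P. a * x P + b * y P) | a b. a \<ge> 0 \<and> b \<ge> 0}"

end

theory Submission
  imports Defs
begin


definition det2 :: "vec2 \<Rightarrow> vec2 \<Rightarrow> real" where
  "det2 u v = u$1 * v$2 - u$2 * v$1"

lemma minksum_seg_image:
  "minksum (closed_segment 0 u) (closed_segment 0 v) =
     (\<lambda>x::real^2. x$1 *\<^sub>R u + x$2 *\<^sub>R v) ` cbox 0 1"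
proof (intro set_eqI iffI)
  fix z assume "z \<in> minksum (closed_segment 0 u) (closed_segment 0 v)"
  then obtain s t where st: "0 \<le> s" "s \<le> 1" "0 \<le> t" "t \<le> 1" "z = s *\<^sub>R u + t *\<^sub>R v"
    unfolding minksum_def closed_segment_def by auto
  have "vector [s,t] \<in> cbox (0::real^2) 1"
    using st by (auto simp: mem_box_cart forall_2)
  then show "z \<in> (\<lambda>x::real^2. x$1 *\<^sub>R u + x$2 *\<^sub>R v) ` cbox 0 1"
    using st by (intro image_eqI[where x="vector [s,t]"]) auto
next
  fix z assume "z \<in> (\<lambda>x::real^2. x$1 *\<^sub>R u + x$2 *\<^sub>R v) ` cbox 0 1"
  then obtain x :: "real^2" where x: "x \<in> cbox 0 1" "z = x$1 *\<^sub>R u + x$2 *\<^sub>R v" by auto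
  have "0 \<le> x$1" "x$1 \<le> 1" "0 \<le> x$2" "x$2 \<le> 1" using x(1) by (auto simp: mem_box_cart)
  then show "z \<in> minksum (closed_segment 0 u) (closed_segment 0 v)"
    unfolding minksum_def closed_segment_def using x(2) by auto
qed

lemma area_minksum_seg:
  "area (minksum (closed_segment 0 u) (closed_segment 0 v)) = \<bar>det2 u v\<bar>"
proof -
  let ?f = "\<lambda>x::real^2. x$1 *\<^sub>R u + x$2 *\<^sub>R v"
  have lin: "linear ?f" by (intro linearI) (auto simp: algebra_simps)
  have "measure lebesgue (?f ` cbox 0 1) = \<bar>det (matrix ?f)\<bar> * measure lebesgue (cbox (0::real^2) 1)"
    by (rule measure_lebesgue_linear_transformation) (auto simp: lin)
  also have "measure lebesgue (cbox (0::real^2) 1) = 1"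
    proof -
      have "(1::real^2) = One" using Cart_1 by auto
      then show ?thesis by (metis content_unit measure_completion sets_lborel closed_cbox borel_closed)
    qed
  also have "det (matrix ?f) = det2 u v"
    by (simp add: det_2 matrix_def det2_def axis_def)
  finally show ?thesis unfolding area_def minksum_seg_image by simp
qed



lemma pair_card2: "card B = 2 \<Longrightarrow> \<exists>x y. B = {x,y} \<and> x \<noteq> y"
  by (meson card_2_iff)

lemma pairings6_block:
  assumes "P \<in> pairings6" "x \<in> {1..6}"
  shows "\<exists>y. y \<noteq> x \<and> y \<in> {1..6} \<and> {x,y} \<in> P"
proof -
  from assms have "x \<in> \<Union>P" unfolding pairings6_def by auto
  then obtain B where B: "B \<in> P" "x \<in> B" by auto
  have "card B = 2" using assms B unfolding pairings6_def by auto
  then obtain u v where uv: "B = {u,v}" "u \<noteq> v" using pair_card2 by blast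
  have "B \<subseteq> {1..6}" using assms(1) B unfolding pairings6_def by auto
  show ?thesis
  proof (cases "x = u")
    case True
    then show ?thesis using B uv \<open>B \<subseteq> {1..6}\<close> by (intro exI[of _ v]) auto
  next
    case False
    then have "x = v" using B uv by auto
    moreover have "{v,u} \<in> P" using B uv by (metis insert_commute)
    ultimately show ?thesis using B uv \<open>B \<subseteq> {1..6}\<close> by (intro exI[of _ u]) auto
  qed
qed

lemma pairings6_uniq:
  assumes "P \<in> pairings6" "{x,y} \<in> P" "{x,z} \<in> P"
  shows "y = z"
proof (rule ccontr)
  assume ne: "y \<noteq> z"
  have d: "\<forall>B\<in>P. \<forall>C\<in>P. B \<noteq> C \<longrightarrow> B \<inter> C = {}" using assms(1) unfolding pairings6_def by simp
  have "{x,y} \<noteq> {x,z}" using ne by (simp add: doubleton_eq_iff)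
  then have "{x,y} \<inter> {x,z} = {}" using d assms(2,3) by (meson)
  then show False by auto
qed

lemma pairings6_fin:
  assumes "P \<in> pairings6" "{a,b} \<in> P" "{c,d} \<in> P" "{e,f} \<in> P"
    and cov: "{a,b,c,d,e,f} = {1..6}"
  shows "P = {{a,b},{c,d},{e,f}}"
proof (intro set_eqI iffI)
  fix C assume C: "C \<in> P"
  have "card C = 2" using assms C unfolding pairings6_def by auto
  then obtain x y where xy: "C = {x,y}" "x \<noteq> y" using pair_card2 by blast
  have "C \<subseteq> {1..6}" using assms(1) C unfolding pairings6_def by auto
  then have "x \<in> {a,b,c,d,e,f}" using xy cov by auto
  have xyP: "{x,y} \<in> P" using C xy by simp
  have s: "{b,a} \<in> P" "{d,c} \<in> P" "{f,e} \<in> P" using assms(2-4) by (metis insert_commute)+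
  have "x = a \<and> y = b \<or> x = b \<and> y = a \<or> x = c \<and> y = d \<or> x = d \<and> y = c \<or> x = e \<and> y = f \<or> x = f \<and> y = e"
    using \<open>x \<in> {a,b,c,d,e,f}\<close>
  proof (elim insertE emptyE)
    assume "x = a" then show ?thesis using pairings6_uniq[OF assms(1) xyP, of b] assms(2) by auto
  next
    assume "x = b" then show ?thesis using pairings6_uniq[OF assms(1) xyP, of a] s(1) by auto
  next
    assume "x = c" then show ?thesis using pairings6_uniq[OF assms(1) xyP, of d] assms(3) by auto
  next
    assume "x = d" then show ?thesis using pairings6_uniq[OF assms(1) xyP, of c] s(2) by auto
  next
    assume "x = e" then show ?thesis using pairings6_uniq[OF assms(1) xyP, of f] assms(4) by auto
  next
    assume "x = f" then show ?thesis using pairings6_uniq[OF assms(1) xyP, of e] s(3) by auto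
  qed
  then show "C \<in> {{a,b},{c,d},{e,f}}" using xy by (elim disjE) (simp_all add: insert_commute)
next
  fix C assume "C \<in> {{a,b},{c,d},{e,f}}"
  then show "C \<in> P" using assms by auto
qed


lemma pairings6_excl:
  assumes "P \<in> pairings6" "{x,y} \<in> P" "{z,w} \<in> P" "z \<noteq> x" "z \<noteq> y"
  shows "w \<noteq> x \<and> w \<noteq> y"
proof -
  have c: "{x,z} \<in> P" if "w = x" using assms(3) that by (metis insert_commute)
  have c2: "{y,z} \<in> P" if "w = y" using assms(3) that by (metis insert_commute)
  have c3: "{y,x} \<in> P" using assms(2) by (metis insert_commute)
  show ?thesis using pairings6_uniq[OF assms(1) assms(2) c] pairings6_uniq[OF assms(1) c3 c2] assms(4,5)
    by auto
qed

lemma pairings6_last2: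
  assumes P: "P \<in> pairings6" and h: "{x,y} \<in> P" "{z,w} \<in> P"
    and cov: "{x,y,z,w,r,s} = {1..6}" and dist: "distinct [x,y,z,w,r,s]"
  shows "P = {{x,y},{z,w},{r,s}}"
proof -
  have "r \<in> {1..6}" using cov by blast
  then obtain q where q: "q \<noteq> r" "q \<in> {1..6}" "{r,q} \<in> P" using pairings6_block[OF P] by blast
  have "q \<in> {x,y,z,w,r,s}" using q(2) cov by blast
  moreover have "q \<noteq> x \<and> q \<noteq> y" using pairings6_excl[OF P h(1) q(3)] dist by auto
  moreover have "q \<noteq> z \<and> q \<noteq> w" using pairings6_excl[OF P h(2) q(3)] dist by auto
  ultimately have "q = s" using q(1) by simp
  then have "{r,s} \<in> P" using q(3) by simp
  then show ?thesis by (rule pairings6_fin[OF P h _ cov])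
qed

lemma pairings6_mid4:
  assumes P: "P \<in> pairings6" and h: "{x,y} \<in> P"
    and cov: "{x,y,c,d,e,f} = {1..6}" and dist: "distinct [x,y,c,d,e,f]"
  shows "P = {{x,y},{c,d},{e,f}} \<or> P = {{x,y},{c,e},{d,f}} \<or> P = {{x,y},{c,f},{d,e}}"
proof -
  have "c \<in> {1..6}" using cov by blast
  then obtain q where q: "q \<noteq> c" "q \<in> {1..6}" "{c,q} \<in> P" using pairings6_block[OF P] by blast
  have "q \<in> {x,y,c,d,e,f}" using q(2) cov by blast
  moreover have "q \<noteq> x \<and> q \<noteq> y" using pairings6_excl[OF P h q(3)] dist by auto
  ultimately have D: "q = d \<or> q = e \<or> q = f" using q(1) by simp
  have A: "P = {{x,y},{c,d},{e,f}}" if "q = d"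
    using pairings6_last2[OF P h q(3)[unfolded that] cov dist] .
  have B: "P = {{x,y},{c,e},{d,f}}" if "q = e"
  proof -
    have cv: "{x,y,c,e,d,f} = {1..6}" using cov by (subst insert_commute[of e d])
    have ds: "distinct [x,y,c,e,d,f]" using dist by auto
    show ?thesis using pairings6_last2[OF P h q(3)[unfolded that] cv ds] .
  qed
  have C: "P = {{x,y},{c,f},{d,e}}" if "q = f"
  proof -
    have cv: "{x,y,c,f,d,e} = {1..6}" using cov by (subst insert_commute[of f d], subst insert_commute[of f e])
    have ds: "distinct [x,y,c,f,d,e]" using dist by auto
    show ?thesis using pairings6_last2[OF P h q(3)[unfolded that] cv ds] .
  qed
  from D show ?thesis
  proof (elim disjE)
    assume "q = d" then show ?thesis using A by (intro disjI1)
  next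
    assume "q = e" then show ?thesis using B by (intro disjI2 disjI1)
  next
    assume "q = f" then show ?thesis using C by (intro disjI2)
  qed
qed

definition pairs15 :: "nat \<Rightarrow> nat \<Rightarrow> nat \<Rightarrow> nat \<Rightarrow> nat \<Rightarrow> nat \<Rightarrow> nat set set set" where
  "pairs15 a b c d e f = {
    {{a,b},{c,d},{e,f}}, {{a,b},{c,e},{d,f}}, {{a,b},{c,f},{d,e}},
    {{a,c},{b,d},{e,f}}, {{a,c},{b,e},{d,f}}, {{a,c},{b,f},{d,e}},
    {{a,d},{b,c},{e,f}}, {{a,d},{b,e},{c,f}}, {{a,d},{b,f},{c,e}},
    {{a,e},{b,c},{d,f}}, {{a,e},{b,d},{c,f}}, {{a,e},{b,f},{c,d}},
    {{a,f},{b,c},{d,e}}, {{a,f},{b,d},{c,e}}, {{a,f},{b,e},{c,d}}}"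

lemma pairings6_enum:
  assumes P: "P \<in> pairings6"
    and cov: "{a,b,c,d,e,f} = {1..6}" and dist: "distinct [a,b,c,d,e,f]"
  shows "P \<in> pairs15 a b c d e f"
proof -
  have "a \<in> {1..6}" using cov by blast
  then obtain q where q: "q \<noteq> a" "q \<in> {1..6}" "{a,q} \<in> P" using pairings6_block[OF P] by blast
  have "q \<in> {a,b,c,d,e,f}" using q(2) cov by blast
  then have Dq: "q = b \<or> q = c \<or> q = d \<or> q = e \<or> q = f" using q(1) by simp
  have B: ?thesis if "q = b"
    using pairings6_mid4[OF P q(3)[unfolded that] cov dist]
    by (elim disjE; hypsubst; simp only: pairs15_def insert_iff simp_thms)
  have C: ?thesis if "q = c"
  proof -
    have cv: "{a,c,b,d,e,f} = {1..6}" using cov by (subst insert_commute[of c b])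
    have ds: "distinct [a,c,b,d,e,f]" using dist by auto
    show ?thesis
      using pairings6_mid4[OF P q(3)[unfolded that] cv ds]
      by (elim disjE; hypsubst; simp only: pairs15_def insert_iff simp_thms)
  qed
  have D: ?thesis if "q = d"
  proof -
    have cv: "{a,d,b,c,e,f} = {1..6}" using cov by (subst insert_commute[of d b], subst insert_commute[of d c])
    have ds: "distinct [a,d,b,c,e,f]" using dist by auto
    show ?thesis
      using pairings6_mid4[OF P q(3)[unfolded that] cv ds]
      by (elim disjE; hypsubst; simp only: pairs15_def insert_iff simp_thms)
  qed
  have E: ?thesis if "q = e"
  proof -
    have cv: "{a,e,b,c,d,f} = {1..6}" using cov by (subst insert_commute[of e b], subst insert_commute[of e c], subst insert_commute[of e d])
    have ds: "distinct [a,e,b,c,d,f]" using dist by auto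
    show ?thesis
      using pairings6_mid4[OF P q(3)[unfolded that] cv ds]
      by (elim disjE; hypsubst; simp only: pairs15_def insert_iff simp_thms)
  qed
  have F: ?thesis if "q = f"
  proof -
    have cv: "{a,f,b,c,d,e} = {1..6}" using cov by (subst insert_commute[of f b], subst insert_commute[of f c], subst insert_commute[of f d], subst insert_commute[of f e])
    have ds: "distinct [a,f,b,c,d,e]" using dist by auto
    show ?thesis
      using pairings6_mid4[OF P q(3)[unfolded that] cv ds]
      by (elim disjE; hypsubst; simp only: pairs15_def insert_iff simp_thms)
  qed
  from Dq show ?thesis
  proof (elim disjE)
    assume "q = b" then show ?thesis by (rule B)
  next
    assume "q = c" then show ?thesis by (rule C)
  next
    assume "q = d" then show ?thesis by (rule D)
  next
    assume "q = e" then show ?thesis by (rule E)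
  next
    assume "q = f" then show ?thesis by (rule F)
  qed
qed



lemma area_seg: "area (closed_segment 0 u) = 0"
proof -
  have "minksum (closed_segment 0 u) (closed_segment 0 0) = closed_segment 0 u"
    unfolding minksum_def by auto
  then show ?thesis using area_minksum_seg[of u 0] by (simp add: det2_def)
qed

lemma mixed_seg: "mixed_area (closed_segment 0 u) (closed_segment 0 v) = \<bar>det2 u v\<bar> / 2"
  unfolding mixed_area_def by (simp add: area_minksum_seg area_seg)

lemma zonoid_seg: "zonoid (closed_segment 0 u)"
proof -
  have z: "zonotope (closed_segment 0 u)"
    unfolding zonotope_def
    by (rule exI[of _ "[(0,u)]"]) (auto simp: minksum_def)
  have h: "hausdist S S = 0" if "S \<noteq> {}" for S
  proof -
    have "(SUP x\<in>S. infdist x S) = 0"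
      using that by (simp add: infdist_zero)
    then show ?thesis unfolding hausdist_def by simp
  qed
  show ?thesis unfolding zonoid_def
    using z h[of "closed_segment 0 u"] by (intro conjI exI[of _ "\<lambda>n. closed_segment 0 u"]) auto
qed

lemma mixed_sym: "mixed_area K L = mixed_area L K"
proof -
  have "minksum K L = minksum L K" unfolding minksum_def by (auto, (metis add.commute)+)
  then show ?thesis unfolding mixed_area_def by simp
qed

lemma minmax_mixed: "mixed_area (Z (min a (b::nat))) (Z (max a b)) = mixed_area (Z a) (Z b)"
  by (cases "a < b") (auto simp: mixed_sym min_def max_def)

lemma pairing_mem:
  assumes cov: "{a,b,c,d,e,f} = {1..6::nat}" and dist: "distinct [a,b,c,d,e,f]"
  shows "{{a,b},{c,d},{e,f}} \<in> pairings6"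
proof -
  have u: "\<Union>{{a,b},{c,d},{e,f}} = {a,b,c,d,e,f}" by auto
  show ?thesis unfolding pairings6_def
  proof (intro CollectI conjI)
    show "\<Union>{{a,b},{c,d},{e,f}} = {1..6}" by (subst u) (rule cov)
  qed (use dist in auto)
qed

lemma Phi3:
  assumes P: "{{a,b},{c,d},{e,f}} \<in> pairings6" and dist: "distinct [a,b,c,d,e,f]"
  shows "Phi Z {{a,b},{c,d},{e,f}} = mixed_area (Z a) (Z b) * mixed_area (Z c) (Z d) * mixed_area (Z e) (Z f)"
proof -
  have n1: "{a,b} \<notin> {{c,d},{e,f}}" using dist by (auto simp: doubleton_eq_iff)
  have n2: "{c,d} \<noteq> {e,f}" using dist by (auto simp: doubleton_eq_iff)
  show ?thesis unfolding Phi_def using P n1 n2 dist by (simp add: minmax_mixed)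
qed

lemma PhiU3:
  assumes P: "{{a,b},{c,d},{e,f}} \<in> pairings6" and dist: "distinct [a,b,c,d,e,f]"
  shows "PhiU U {{a,b},{c,d},{e,f}} = (\<bar>det2 (U a) (U b)\<bar>/2) * (\<bar>det2 (U c) (U d)\<bar>/2) * (\<bar>det2 (U e) (U f)\<bar>/2)"
  unfolding PhiU_def by (simp add: Phi3[OF P dist] mixed_seg)

lemma PhiU_nonneg: "PhiU U P \<ge> 0"
  unfolding PhiU_def Phi_def by (auto simp: mixed_seg intro!: prod_nonneg)

lemma PhiU_in: "PhiU U \<in> Phi_image"
  unfolding Phi_image_def PhiU_def using zonoid_seg by blast



lemma pairings6_form:
  assumes "P \<in> pairings6"
  shows "\<exists>p1 p2 p3 p4 p5 p6. P = {{p1,p2},{p3,p4},{p5,p6}} \<and> distinct [p1,p2,p3,p4,p5,p6]"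
proof -
  have "P \<in> pairs15 1 2 3 4 5 6"
    by (rule pairings6_enum[OF assms]) auto
  then show ?thesis unfolding pairs15_def
    by (simp only: insert_iff empty_iff simp_thms) (elim disjE; hypsubst; (intro exI conjI, rule refl, simp))
qed

lemma det2_scale: "det2 (a *\<^sub>R u) (b *\<^sub>R v) = a * b * det2 u v"
  unfolding det2_def by (simp add: algebra_simps)

lemma PhiU_scale:
  assumes "t \<ge> 0"
  shows "PhiU (\<lambda>i. root 6 t *\<^sub>R U i) = (\<lambda>P. t * PhiU U P)"
proof
  fix P
  show "PhiU (\<lambda>i. root 6 t *\<^sub>R U i) P = t * PhiU U P"
  proof (cases "P \<in> pairings6")
    case False then show ?thesis unfolding PhiU_def Phi_def by simp
  next
    case True
    then obtain p1 p2 p3 p4 p5 p6 where P: "P = {{p1,p2},{p3,p4},{p5,p6}}" and d: "distinct [p1,p2,p3,p4,p5,p6]"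
      using pairings6_form[OF True] by (elim exE conjE) simp
    have r: "(root 6 t)^6 = t" using assms by simp
    have T: "{{p1,p2},{p3,p4},{p5,p6}} \<in> pairings6" using True P by simp
    define r where "r = root 6 t"
    have r0: "r \<ge> 0" unfolding r_def using assms by simp
    have "PhiU (\<lambda>i. r *\<^sub>R U i) P = (\<bar>r*r*det2 (U p1) (U p2)\<bar>/2) * (\<bar>r*r*det2 (U p3) (U p4)\<bar>/2) * (\<bar>r*r*det2 (U p5) (U p6)\<bar>/2)"
      unfolding P PhiU3[OF T d] det2_scale ..
    also have "\<dots> = r^6 * ((\<bar>det2 (U p1) (U p2)\<bar>/2) * (\<bar>det2 (U p3) (U p4)\<bar>/2) * (\<bar>det2 (U p5) (U p6)\<bar>/2))"
      using r0 by (simp add: abs_mult eval_nat_numeral)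
    also have "\<dots> = r^6 * PhiU U P" unfolding P PhiU3[OF T d] ..
    finally have "PhiU (\<lambda>i. root 6 t *\<^sub>R U i) P = (root 6 t)^6 * PhiU U P" unfolding r_def .
    then show ?thesis using r by simp
  qed
qed

lemma ray_in: "ray_of (PhiU U) \<subseteq> Phi_image"
proof
  fix z assume "z \<in> ray_of (PhiU U)"
  then obtain t where t: "t \<ge> 0" "z = (\<lambda>P. t * PhiU U P)" unfolding ray_of_def by auto
  then show "z \<in> Phi_image" using PhiU_scale[OF t(1), of U] PhiU_in[of "\<lambda>i. root 6 t *\<^sub>R U i"] by simp
qed



lemma par_det: "parallel u v \<Longrightarrow> det2 u v = 0"
  unfolding parallel_def det2_def by (auto simp: algebra_simps)

lemma npar_det:
  assumes "\<not> parallel u v" "v \<noteq> 0" shows "det2 u v \<noteq> 0"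
proof
  assume d: "det2 u v = 0"
  have "v$1 \<noteq> 0 \<or> v$2 \<noteq> 0" using assms(2) by (auto simp: vec_eq_iff forall_2)
  then show False
  proof
    assume v1: "v$1 \<noteq> 0"
    have "u = (u$1 / v$1) *\<^sub>R v"
      using v1 d unfolding det2_def by (auto simp: vec_eq_iff forall_2 field_simps)
    then show False using assms(1) unfolding parallel_def by blast
  next
    assume v2: "v$2 \<noteq> 0"
    have "u = (u$2 / v$2) *\<^sub>R v"
      using v2 d unfolding det2_def by (auto simp: vec_eq_iff forall_2 field_simps)
    then show False using assms(1) unfolding parallel_def by blast
  qed
qed

lemma neg_core:
  assumes dist: "distinct [p1,q1,p2,q2,p3,q3]" and cov: "{p1,q1,p2,q2,p3,q3} = {1..6}"
    and x0: "det2 (U1 p1) (U1 q1) \<noteq> 0" "det2 (U1 p2) (U1 q2) \<noteq> 0" "det2 (U1 p3) (U1 q3) \<noteq> 0"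
    and x1: "det2 (U1 p1) (U1 p2) = 0"
    and y1: "det2 (U2 p3) (U2 q3) = 0"
    and y2: "det2 (U2 p1) (U2 p2) \<noteq> 0" "det2 (U2 p3) (U2 q2) \<noteq> 0" "det2 (U2 q1) (U2 q3) \<noteq> 0"
    and y3: "det2 (U2 p1) (U2 p3) \<noteq> 0" "det2 (U2 p2) (U2 q3) \<noteq> 0" "det2 (U2 q1) (U2 q2) \<noteq> 0"
    and ab: "a > 0" "b > 0"
    and z: "(\<lambda>P. a * PhiU U1 P + b * PhiU U2 P) \<in> Phi_image"
  shows False
proof -
  obtain Z where Z: "(\<lambda>P. a * PhiU U1 P + b * PhiU U2 P) = Phi Z" using z unfolding Phi_image_def by auto
  have zP: "Phi Z P = a * PhiU U1 P + b * PhiU U2 P" for P using Z by metis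
  have c0: "{p1,q1,p2,q2,p3,q3} = {1..6}" using cov by (simp add: insert_commute)
  have c1: "{p1,p2,p3,q3,q1,q2} = {1..6}" using cov by (simp add: insert_commute)
  have c2: "{p1,p2,p3,q2,q1,q3} = {1..6}" using cov by (simp add: insert_commute)
  have c3: "{p1,p3,p2,q3,q1,q2} = {1..6}" using cov by (simp add: insert_commute)
  have d0: "distinct [p1,q1,p2,q2,p3,q3]" using dist by auto
  have d1: "distinct [p1,p2,p3,q3,q1,q2]" using dist by auto
  have d2: "distinct [p1,p2,p3,q2,q1,q3]" using dist by auto
  have d3: "distinct [p1,p3,p2,q3,q1,q2]" using dist by auto
  note m0 = pairing_mem[OF c0 d0] and m1 = pairing_mem[OF c1 d1]
    and m2 = pairing_mem[OF c2 d2] and m3 = pairing_mem[OF c3 d3]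
  define g where "g i j = mixed_area (Z i) (Z j)" for i j
  have "Phi Z {{p1,q1},{p2,q2},{p3,q3}} > 0"
  proof -
    have "PhiU U1 {{p1,q1},{p2,q2},{p3,q3}} > 0" using x0 by (simp add: PhiU3[OF m0 d0])
    then show ?thesis using zP ab PhiU_nonneg[of U2] by (simp add: add_pos_nonneg)
  qed
  then have g0: "g p3 q3 \<noteq> 0" by (auto simp: Phi3[OF m0 d0] g_def)
  have "Phi Z {{p1,p2},{p3,q2},{q1,q3}} > 0"
  proof -
    have "PhiU U2 {{p1,p2},{p3,q2},{q1,q3}} > 0" using y2 by (simp add: PhiU3[OF m2 d2])
    then show ?thesis using zP ab PhiU_nonneg[of U1] by (simp add: add_nonneg_pos)
  qed
  then have g2: "g p1 p2 \<noteq> 0" by (auto simp: Phi3[OF m2 d2] g_def)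
  have "Phi Z {{p1,p3},{p2,q3},{q1,q2}} > 0"
  proof -
    have "PhiU U2 {{p1,p3},{p2,q3},{q1,q2}} > 0" using y3 by (simp add: PhiU3[OF m3 d3])
    then show ?thesis using zP ab PhiU_nonneg[of U1] by (simp add: add_nonneg_pos)
  qed
  then have g3: "g q1 q2 \<noteq> 0" by (auto simp: Phi3[OF m3 d3] g_def)
  have "Phi Z {{p1,p2},{p3,q3},{q1,q2}} = 0"
    using zP[of "{{p1,p2},{p3,q3},{q1,q2}}"] x1 y1 by (simp add: PhiU3[OF m1 d1])
  then show False using g0 g2 g3 by (simp add: Phi3[OF m1 d1] g_def)
qed



lemma det2_self: "det2 u u = 0" unfolding det2_def by simp

lemma pos_core:
  assumes dist: "distinct [j1,j2,k,m,n1,n2]" and cov: "{j1,j2,k,m,n1,n2} = {1..6}"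
    and r1: "U1 j1 = w1 *\<^sub>R e" "U1 j2 = w2 *\<^sub>R e" "U1 k = w3 *\<^sub>R e"
            "U1 m = w4 *\<^sub>R f" "U1 n1 = w5 *\<^sub>R f" "U1 n2 = w6 *\<^sub>R f"
    and r2: "U2 j1 = v1 *\<^sub>R g1" "U2 j2 = v2 *\<^sub>R g1" "U2 k = v3 *\<^sub>R g2"
            "U2 m = v4 *\<^sub>R g2" "U2 n1 = v5 *\<^sub>R g3" "U2 n2 = v6 *\<^sub>R g3"
  shows "cone2 (PhiU U1) (PhiU U2) \<subseteq> Phi_image"
proof
  fix z assume "z \<in> cone2 (PhiU U1) (PhiU U2)"
  then obtain a b where ab: "a \<ge> 0" "b \<ge> 0" and z: "z = (\<lambda>P. a * PhiU U1 P + b * PhiU U2 P)"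
    unfolding cone2_def by auto
  define D where "D = \<bar>det2 e f\<bar>"
  define E12 where "E12 = \<bar>det2 g1 g2\<bar>"
  define E13 where "E13 = \<bar>det2 g1 g3\<bar>"
  define E23 where "E23 = \<bar>det2 g2 g3\<bar>"
  define c1 where "c1 = \<bar>w1\<bar>*\<bar>w2\<bar>*\<bar>w3\<bar>*\<bar>w4\<bar>*\<bar>w5\<bar>*\<bar>w6\<bar> * D^3 / 8"
  define c2 where "c2 = \<bar>v1\<bar>*\<bar>v2\<bar>*\<bar>v3\<bar>*\<bar>v4\<bar>*\<bar>v5\<bar>*\<bar>v6\<bar> * E12 * E13 * E23 / 8"
  have c1: "c1 \<ge> 0" unfolding c1_def D_def by simp
  have c2: "c2 \<ge> 0" unfolding c2_def E12_def E13_def E23_def by simp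
  define A where "A = a * c1"
  define B where "B = b * c2"
  have A: "A \<ge> 0" unfolding A_def using ab c1 by simp
  have B: "B \<ge> 0" unfolding B_def using ab c2 by simp
  define W where "W i = (if i = j1 \<or> i = j2 then vector [1,0] else if i = n1 \<or> i = n2 then vector [0,1]
       else if i = k then vector [1,1] else (vector [8*B, 8*(A+B)] :: real^2))" for i
  have nq: "j1 \<noteq> j2" "j1 \<noteq> k" "j1 \<noteq> m" "j1 \<noteq> n1" "j1 \<noteq> n2" "j2 \<noteq> k" "j2 \<noteq> m" "j2 \<noteq> n1" "j2 \<noteq> n2"
     "k \<noteq> m" "k \<noteq> n1" "k \<noteq> n2" "m \<noteq> n1" "m \<noteq> n2" "n1 \<noteq> n2" using dist by auto
  note nq' = nq nq[symmetric]
  have Wv: "W j1 = vector [1,0]" "W j2 = vector [1,0]" "W k = vector [1,1]" "W m = vector [8*B, 8*(A+B)]"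
     "W n1 = vector [0,1]" "W n2 = vector [0,1]" unfolding W_def using nq' by auto
  have hW: "\<bar>det2 (W j1) (W j2)\<bar> = 0" "\<bar>det2 (W j1) (W k)\<bar> = 1" "\<bar>det2 (W j1) (W m)\<bar> = 8*(A+B)"
     "\<bar>det2 (W j1) (W n1)\<bar> = 1" "\<bar>det2 (W j1) (W n2)\<bar> = 1"
     "\<bar>det2 (W j2) (W k)\<bar> = 1" "\<bar>det2 (W j2) (W m)\<bar> = 8*(A+B)"
     "\<bar>det2 (W j2) (W n1)\<bar> = 1" "\<bar>det2 (W j2) (W n2)\<bar> = 1"
     "\<bar>det2 (W k) (W m)\<bar> = 8*A" "\<bar>det2 (W k) (W n1)\<bar> = 1" "\<bar>det2 (W k) (W n2)\<bar> = 1"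
     "\<bar>det2 (W m) (W n1)\<bar> = 8*B" "\<bar>det2 (W m) (W n2)\<bar> = 8*B" "\<bar>det2 (W n1) (W n2)\<bar> = 0"
    unfolding Wv det2_def using A B by simp_all
  have hx: "\<bar>det2 (U1 j1) (U1 j2)\<bar> = 0" "\<bar>det2 (U1 j1) (U1 k)\<bar> = 0" "\<bar>det2 (U1 j1) (U1 m)\<bar> = \<bar>w1\<bar>*\<bar>w4\<bar>*D"
     "\<bar>det2 (U1 j1) (U1 n1)\<bar> = \<bar>w1\<bar>*\<bar>w5\<bar>*D" "\<bar>det2 (U1 j1) (U1 n2)\<bar> = \<bar>w1\<bar>*\<bar>w6\<bar>*D"
     "\<bar>det2 (U1 j2) (U1 k)\<bar> = 0" "\<bar>det2 (U1 j2) (U1 m)\<bar> = \<bar>w2\<bar>*\<bar>w4\<bar>*D"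
     "\<bar>det2 (U1 j2) (U1 n1)\<bar> = \<bar>w2\<bar>*\<bar>w5\<bar>*D" "\<bar>det2 (U1 j2) (U1 n2)\<bar> = \<bar>w2\<bar>*\<bar>w6\<bar>*D"
     "\<bar>det2 (U1 k) (U1 m)\<bar> = \<bar>w3\<bar>*\<bar>w4\<bar>*D" "\<bar>det2 (U1 k) (U1 n1)\<bar> = \<bar>w3\<bar>*\<bar>w5\<bar>*D"
     "\<bar>det2 (U1 k) (U1 n2)\<bar> = \<bar>w3\<bar>*\<bar>w6\<bar>*D"
     "\<bar>det2 (U1 m) (U1 n1)\<bar> = 0" "\<bar>det2 (U1 m) (U1 n2)\<bar> = 0" "\<bar>det2 (U1 n1) (U1 n2)\<bar> = 0"
    unfolding r1 det2_scale D_def by (simp_all add: det2_self abs_mult)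
  have hy: "\<bar>det2 (U2 j1) (U2 j2)\<bar> = 0" "\<bar>det2 (U2 j1) (U2 k)\<bar> = \<bar>v1\<bar>*\<bar>v3\<bar>*E12" "\<bar>det2 (U2 j1) (U2 m)\<bar> = \<bar>v1\<bar>*\<bar>v4\<bar>*E12"
     "\<bar>det2 (U2 j1) (U2 n1)\<bar> = \<bar>v1\<bar>*\<bar>v5\<bar>*E13" "\<bar>det2 (U2 j1) (U2 n2)\<bar> = \<bar>v1\<bar>*\<bar>v6\<bar>*E13"
     "\<bar>det2 (U2 j2) (U2 k)\<bar> = \<bar>v2\<bar>*\<bar>v3\<bar>*E12" "\<bar>det2 (U2 j2) (U2 m)\<bar> = \<bar>v2\<bar>*\<bar>v4\<bar>*E12"
     "\<bar>det2 (U2 j2) (U2 n1)\<bar> = \<bar>v2\<bar>*\<bar>v5\<bar>*E13" "\<bar>det2 (U2 j2) (U2 n2)\<bar> = \<bar>v2\<bar>*\<bar>v6\<bar>*E13"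
     "\<bar>det2 (U2 k) (U2 m)\<bar> = 0" "\<bar>det2 (U2 k) (U2 n1)\<bar> = \<bar>v3\<bar>*\<bar>v5\<bar>*E23"
     "\<bar>det2 (U2 k) (U2 n2)\<bar> = \<bar>v3\<bar>*\<bar>v6\<bar>*E23"
     "\<bar>det2 (U2 m) (U2 n1)\<bar> = \<bar>v4\<bar>*\<bar>v5\<bar>*E23" "\<bar>det2 (U2 m) (U2 n2)\<bar> = \<bar>v4\<bar>*\<bar>v6\<bar>*E23"
     "\<bar>det2 (U2 n1) (U2 n2)\<bar> = 0"
    unfolding r2 det2_scale E12_def E13_def E23_def by (simp_all add: det2_self abs_mult)
  have eq: "z P = PhiU W P" for P
  proof (cases "P \<in> pairings6")
    case False then show ?thesis unfolding z PhiU_def Phi_def by simp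
  next
    case True
    have "P \<in> pairs15 j1 j2 k m n1 n2" by (rule pairings6_enum[OF True cov dist])
    then show ?thesis using True unfolding pairs15_def z
      by (simp only: insert_iff empty_iff simp_thms)
         (elim disjE; hypsubst; simp only: PhiU3 distinct.simps list.set insert_iff empty_iff simp_thms nq' hW hx hy not_False_eq_True;
          simp add: A_def B_def c1_def c2_def algebra_simps power3_eq_cube)
  qed
  have "z = PhiU W" using eq by auto
  then show "z \<in> Phi_image" using PhiU_in by simp
qed



lemma card2_obtain: "card A = 2 \<Longrightarrow> \<exists>x y. A = {x,y} \<and> x \<noteq> y"
  by (meson card_2_iff)

lemma pos_names:
  fixes A B C K L :: "nat set"
  assumes cA: "card A = 2" and cB: "card B = 2" and cC: "card C = 2"
    and dAB: "A \<inter> B = {}" and dAC: "A \<inter> C = {}" and dBC: "B \<inter> C = {}"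
    and uI: "A \<union> B \<union> C = {1..6}"
    and uJ: "K \<union> L = {1..6}" and dKL: "K \<inter> L = {}" and cK: "card K = 3" and cL: "card L = 3"
    and sub: "A \<subseteq> K"
  shows "\<exists>j1 j2 k m n1 n2. distinct [j1,j2,k,m,n1,n2] \<and> {j1,j2,k,m,n1,n2} = {1..6} \<and>
     A = {j1,j2} \<and> K = {j1,j2,k} \<and> L = {m,n1,n2} \<and>
     ((B = {k,m} \<and> C = {n1,n2}) \<or> (C = {k,m} \<and> B = {n1,n2}))"
proof -
  obtain j1 j2 where A: "A = {j1,j2}" "j1 \<noteq> j2" using card2_obtain[OF cA] by blast
  have fK: "finite K" using cK by (metis card.infinite zero_neq_numeral)
  have fA: "finite A" using A by simp
  have "card (K - A) = 1" using card_Diff_subset[OF fA sub] cK cA by simp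
  then obtain k where k: "K - A = {k}" by (meson card_1_singletonE)
  have K: "K = {j1,j2,k}" using k sub A by auto
  have kA: "k \<notin> A" using k by auto
  have k6: "k \<in> {1..6}" using K uJ by auto
  have gen: "\<exists>j1 j2 k m n1 n2. distinct [j1,j2,k,m,n1,n2] \<and> {j1,j2,k,m,n1,n2} = {1..6} \<and>
     A = {j1,j2} \<and> K = {j1,j2,k} \<and> L = {m,n1,n2} \<and> (B' = {k,m} \<and> C' = {n1,n2})"
    if cB': "card B' = 2" and cC': "card C' = 2" and dAB': "A \<inter> B' = {}" and dAC': "A \<inter> C' = {}"
      and dBC': "B' \<inter> C' = {}" and uI': "A \<union> B' \<union> C' = {1..6}" and kB: "k \<in> B'" for B' C'
  proof -
    obtain x y where xy: "B' = {x,y}" "x \<noteq> y" using card2_obtain[OF cB'] by blast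
    obtain m where m: "B' = {k,m}" "m \<noteq> k" using xy kB by (cases "x = k") (auto simp: insert_commute)
    obtain n1 n2 where n: "C' = {n1,n2}" "n1 \<noteq> n2" using card2_obtain[OF cC'] by blast
    have d: "distinct [j1,j2,k,m,n1,n2]" using A dAB' dAC' dBC' m n kA by auto
    have c: "{j1,j2,k,m,n1,n2} = {1..6}" using uI' A m n by auto
    have mL: "m \<in> L" "n1 \<in> L" "n2 \<in> L" using d c K uJ by auto
    have "{m,n1,n2} \<subseteq> L" using mL by auto
    moreover have "card {m,n1,n2} = 3" using d by simp
    moreover have "finite L" using cL by (metis card.infinite zero_neq_numeral)
    ultimately have L: "L = {m,n1,n2}" using cL by (metis card_subset_eq)
    show ?thesis using d c A K L m n by (intro exI conjI) assumption+
  qed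
  have "k \<in> A \<union> B \<union> C" using k6 uI by simp
  then have "k \<in> B \<or> k \<in> C" using kA by blast
  then show ?thesis
  proof
    assume "k \<in> B"
    then show ?thesis using gen[OF cB cC dAB dAC dBC uI] by blast
  next
    assume "k \<in> C"
    moreover have "C \<inter> B = {}" using dBC by auto
    moreover have "A \<union> C \<union> B = A \<union> B \<union> C" by blast
    then have "A \<union> C \<union> B = {1..6}" using uI by simp
    ultimately show ?thesis using gen[OF cC cB dAC dAB] by blast
  qed
qed



lemma pos_main:
  fixes A B C K L :: "nat set"
  assumes cA: "card A = 2" and cB: "card B = 2" and cC: "card C = 2"
    and dAB: "A \<inter> B = {}" and dAC: "A \<inter> C = {}" and dBC: "B \<inter> C = {}"
    and uI: "A \<union> B \<union> C = {1..6}"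
    and uJ: "K \<union> L = {1..6}" and dKL: "K \<inter> L = {}" and cK: "card K = 3" and cL: "card L = 3"
    and pA: "\<forall>i\<in>A. \<forall>j\<in>A. parallel (U2 i) (U2 j)"
    and pB: "\<forall>i\<in>B. \<forall>j\<in>B. parallel (U2 i) (U2 j)"
    and pC: "\<forall>i\<in>C. \<forall>j\<in>C. parallel (U2 i) (U2 j)"
    and pK: "\<forall>i\<in>K. \<forall>j\<in>K. parallel (U1 i) (U1 j)"
    and pL: "\<forall>i\<in>L. \<forall>j\<in>L. parallel (U1 i) (U1 j)"
    and sub: "A \<subseteq> K"
  shows "cone2 (PhiU U1) (PhiU U2) \<subseteq> Phi_image"
proof -
  obtain j1 j2 k m n1 n2 where d: "distinct [j1,j2,k,m,n1,n2]" and c: "{j1,j2,k,m,n1,n2} = {1..6}"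
    and hA: "A = {j1,j2}" and hK: "K = {j1,j2,k}" and hL: "L = {m,n1,n2}"
    and hBC: "(B = {k,m} \<and> C = {n1,n2}) \<or> (C = {k,m} \<and> B = {n1,n2})"
    using pos_names[OF cA cB cC dAB dAC dBC uI uJ dKL cK cL sub] by (elim exE conjE) simp
  have pkm: "parallel (U2 m) (U2 k)" and pn: "parallel (U2 n2) (U2 n1)"
    using hBC pB pC by auto
  have p1: "parallel (U1 j2) (U1 j1)" "parallel (U1 k) (U1 j1)" using pK hK by auto
  have p2: "parallel (U1 n1) (U1 m)" "parallel (U1 n2) (U1 m)" using pL hL by auto
  have p3: "parallel (U2 j2) (U2 j1)" using pA hA by auto
  obtain w2 where w2: "U1 j2 = w2 *\<^sub>R U1 j1" using p1(1) unfolding parallel_def by blast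
  obtain w3 where w3: "U1 k = w3 *\<^sub>R U1 j1" using p1(2) unfolding parallel_def by blast
  obtain w5 where w5: "U1 n1 = w5 *\<^sub>R U1 m" using p2(1) unfolding parallel_def by blast
  obtain w6 where w6: "U1 n2 = w6 *\<^sub>R U1 m" using p2(2) unfolding parallel_def by blast
  obtain v2 where v2: "U2 j2 = v2 *\<^sub>R U2 j1" using p3 unfolding parallel_def by blast
  obtain v4 where v4: "U2 m = v4 *\<^sub>R U2 k" using pkm unfolding parallel_def by blast
  obtain v6 where v6: "U2 n2 = v6 *\<^sub>R U2 n1" using pn unfolding parallel_def by blast
  show ?thesis
    by (rule pos_core[OF d c, of U1 1 "U1 j1" w2 w3 1 "U1 m" w5 w6 U2 1 "U2 j1" v2 1 "U2 k" v4 1 "U2 n1" v6])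
       (simp_all add: w2 w3 w5 w6 v2 v4 v6)
qed

lemma neg_names:
  assumes "card I = 2" "I \<subseteq> J1 \<union> J2" "\<not> I \<subseteq> J1" "\<not> I \<subseteq> J2" "J1 \<inter> J2 = {}"
  shows "\<exists>p q. p \<in> J1 \<and> q \<in> J2 \<and> I = {p,q}"
proof -
  obtain p where p: "p \<in> I" "p \<notin> J2" using assms(4) by blast
  obtain q where q: "q \<in> I" "q \<notin> J1" using assms(3) by blast
  have pJ: "p \<in> J1" "q \<in> J2" using p q assms(2) by auto
  have "p \<noteq> q" using pJ assms(5) by auto
  then have "card {p,q} = 2" by simp
  moreover have "{p,q} \<subseteq> I" using p q by auto
  moreover have "finite I" using assms(1) by (metis card.infinite zero_neq_numeral)
  ultimately have "I = {p,q}" using assms(1) by (metis card_subset_eq)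
  then show ?thesis using pJ by blast
qed



theorem proposition7p6:
  fixes U1 U2 :: "nat \<Rightarrow> real^2" and J1 J2 I1 I2 I3 :: "nat set"
  assumes "type33 U1 J1 J2"
    and "type222 U2 I1 I2 I3"
  shows "(labeling_prec I1 I2 I3 J1 J2 \<longrightarrow> cone2 (PhiU U1) (PhiU U2) \<subseteq> Phi_image)
       \<and> (\<not> labeling_prec I1 I2 I3 J1 J2 \<longrightarrow>
            cone2 (PhiU U1) (PhiU U2) \<inter> Phi_image = ray_of (PhiU U1) \<union> ray_of (PhiU U2))"
proof -
  obtain U1nz: "\<forall>i\<in>{1..6}. U1 i \<noteq> 0" and uJ: "J1 \<union> J2 = {1..6}" and dJ: "J1 \<inter> J2 = {}"
    and cJ1: "card J1 = 3" and cJ2: "card J2 = 3"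
    and parJ: "\<forall>J\<in>{J1, J2}. \<forall>i\<in>J. \<forall>j\<in>J. parallel (U1 i) (U1 j)"
    and npJ: "\<forall>i\<in>J1. \<forall>j\<in>J2. \<not> parallel (U1 i) (U1 j)"
    using assms(1) unfolding type33_def by (elim conjE) (rule that)
  obtain U2nz: "\<forall>i\<in>{1..6}. U2 i \<noteq> 0" and uI: "I1 \<union> I2 \<union> I3 = {1..6}"
    and d12: "I1 \<inter> I2 = {}" and d13: "I1 \<inter> I3 = {}" and d23: "I2 \<inter> I3 = {}"
    and c1: "card I1 = 2" and c2: "card I2 = 2" and c3: "card I3 = 2"
    and parI: "\<forall>I\<in>{I1, I2, I3}. \<forall>i\<in>I. \<forall>j\<in>I. parallel (U2 i) (U2 j)"
    and npI: "\<forall>I\<in>{I1, I2, I3}. \<forall>I'\<in>{I1, I2, I3}. I \<noteq> I' \<longrightarrow> (\<forall>i\<in>I. \<forall>j\<in>I'. \<not> parallel (U2 i) (U2 j))"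
    using assms(2) unfolding type222_def by (elim conjE) (rule that)
  have pJ1: "\<forall>i\<in>J1. \<forall>j\<in>J1. parallel (U1 i) (U1 j)" and pJ2: "\<forall>i\<in>J2. \<forall>j\<in>J2. parallel (U1 i) (U1 j)"
    using parJ by auto
  have pI1: "\<forall>i\<in>I1. \<forall>j\<in>I1. parallel (U2 i) (U2 j)" and pI2: "\<forall>i\<in>I2. \<forall>j\<in>I2. parallel (U2 i) (U2 j)"
    and pI3: "\<forall>i\<in>I3. \<forall>j\<in>I3. parallel (U2 i) (U2 j)"
    using parI by auto
  have d21: "I2 \<inter> I1 = {}" and d31: "I3 \<inter> I1 = {}" and d32: "I3 \<inter> I2 = {}" and dJ': "J2 \<inter> J1 = {}"
    using d12 d13 d23 dJ by blast+
  have u213: "I2 \<union> I1 \<union> I3 = {1..6}" using uI by (simp add: Un_ac)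
  have u312: "I3 \<union> I1 \<union> I2 = {1..6}" using uI by (simp add: Un_ac)
  have uJ': "J2 \<union> J1 = {1..6}" using uJ by (simp add: Un_ac)
  have P1: "labeling_prec I1 I2 I3 J1 J2 \<longrightarrow> cone2 (PhiU U1) (PhiU U2) \<subseteq> Phi_image"
  proof
    assume "labeling_prec I1 I2 I3 J1 J2"
    then have "I1 \<subseteq> J1 \<or> I1 \<subseteq> J2 \<or> I2 \<subseteq> J1 \<or> I2 \<subseteq> J2 \<or> I3 \<subseteq> J1 \<or> I3 \<subseteq> J2"
      unfolding labeling_prec_def by auto
    then show "cone2 (PhiU U1) (PhiU U2) \<subseteq> Phi_image"
    proof (elim disjE)
      assume s: "I1 \<subseteq> J1"
      show ?thesis by (rule pos_main[OF c1 c2 c3 d12 d13 d23 uI uJ dJ cJ1 cJ2 pI1 pI2 pI3 pJ1 pJ2 s])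
    next
      assume s: "I1 \<subseteq> J2"
      show ?thesis by (rule pos_main[OF c1 c2 c3 d12 d13 d23 uI uJ' dJ' cJ2 cJ1 pI1 pI2 pI3 pJ2 pJ1 s])
    next
      assume s: "I2 \<subseteq> J1"
      show ?thesis by (rule pos_main[OF c2 c1 c3 d21 d23 d13 u213 uJ dJ cJ1 cJ2 pI2 pI1 pI3 pJ1 pJ2 s])
    next
      assume s: "I2 \<subseteq> J2"
      show ?thesis by (rule pos_main[OF c2 c1 c3 d21 d23 d13 u213 uJ' dJ' cJ2 cJ1 pI2 pI1 pI3 pJ2 pJ1 s])
    next
      assume s: "I3 \<subseteq> J1"
      show ?thesis by (rule pos_main[OF c3 c1 c2 d31 d32 d12 u312 uJ dJ cJ1 cJ2 pI3 pI1 pI2 pJ1 pJ2 s])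
    next
      assume s: "I3 \<subseteq> J2"
      show ?thesis by (rule pos_main[OF c3 c1 c2 d31 d32 d12 u312 uJ' dJ' cJ2 cJ1 pI3 pI1 pI2 pJ2 pJ1 s])
    qed
  qed
  have P2: "\<not> labeling_prec I1 I2 I3 J1 J2 \<longrightarrow>
            cone2 (PhiU U1) (PhiU U2) \<inter> Phi_image = ray_of (PhiU U1) \<union> ray_of (PhiU U2)"
  proof
    assume nl: "\<not> labeling_prec I1 I2 I3 J1 J2"
    then have n: "\<not> I1 \<subseteq> J1" "\<not> I1 \<subseteq> J2" "\<not> I2 \<subseteq> J1" "\<not> I2 \<subseteq> J2" "\<not> I3 \<subseteq> J1" "\<not> I3 \<subseteq> J2"
      unfolding labeling_prec_def by auto
    have s: "I1 \<subseteq> J1 \<union> J2" "I2 \<subseteq> J1 \<union> J2" "I3 \<subseteq> J1 \<union> J2" using uI uJ by blast+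
    obtain p1 q1 where pq1: "p1 \<in> J1" "q1 \<in> J2" "I1 = {p1,q1}" using neg_names[OF c1 s(1) n(1,2) dJ] by blast
    obtain p2 q2 where pq2: "p2 \<in> J1" "q2 \<in> J2" "I2 = {p2,q2}" using neg_names[OF c2 s(2) n(3,4) dJ] by blast
    obtain p3 q3 where pq3: "p3 \<in> J1" "q3 \<in> J2" "I3 = {p3,q3}" using neg_names[OF c3 s(3) n(5,6) dJ] by blast
    have dist: "distinct [p1,q1,p2,q2,p3,q3]" using pq1 pq2 pq3 d12 d13 d23 dJ by auto
    have "{p1,q1,p2,q2,p3,q3} = I1 \<union> I2 \<union> I3" using pq1 pq2 pq3 by auto
    then have cov: "{p1,q1,p2,q2,p3,q3} = {1..6}" using uI by simp
    have in6: "p1 \<in> {1..6}" "q1 \<in> {1..6}" "p2 \<in> {1..6}" "q2 \<in> {1..6}" "p3 \<in> {1..6}" "q3 \<in> {1..6}"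
      using cov by blast+
    have ne: "I1 \<noteq> I2" "I1 \<noteq> I3" "I2 \<noteq> I3" using pq1 pq2 pq3 d12 d13 d23 by auto
    have npI': "\<not> parallel (U2 i) (U2 j)" if "I \<in> {I1,I2,I3}" "I' \<in> {I1,I2,I3}" "I \<noteq> I'" "i \<in> I" "j \<in> I'" for I I' i j
      using npI that by blast
    have x0: "det2 (U1 p1) (U1 q1) \<noteq> 0" "det2 (U1 p2) (U1 q2) \<noteq> 0" "det2 (U1 p3) (U1 q3) \<noteq> 0"
      using npar_det npJ pq1 pq2 pq3 U1nz in6 by auto
    have x1: "det2 (U1 p1) (U1 p2) = 0" using par_det pJ1 pq1 pq2 by auto
    have y1: "det2 (U2 p3) (U2 q3) = 0" using par_det pI3 pq3 by auto
    have y2: "det2 (U2 p1) (U2 p2) \<noteq> 0" "det2 (U2 p3) (U2 q2) \<noteq> 0" "det2 (U2 q1) (U2 q3) \<noteq> 0"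
      "det2 (U2 p1) (U2 p3) \<noteq> 0" "det2 (U2 p2) (U2 q3) \<noteq> 0" "det2 (U2 q1) (U2 q2) \<noteq> 0"
    proof -
      have a: "\<not> parallel (U2 p1) (U2 p2)" using npI'[of I1 I2 p1 p2] ne pq1 pq2 by auto
      have b: "\<not> parallel (U2 p3) (U2 q2)" using npI'[of I3 I2 p3 q2] ne pq3 pq2 by auto
      have c: "\<not> parallel (U2 q1) (U2 q3)" using npI'[of I1 I3 q1 q3] ne pq1 pq3 by auto
      have d: "\<not> parallel (U2 p1) (U2 p3)" using npI'[of I1 I3 p1 p3] ne pq1 pq3 by auto
      have e: "\<not> parallel (U2 p2) (U2 q3)" using npI'[of I2 I3 p2 q3] ne pq2 pq3 by auto
      have f: "\<not> parallel (U2 q1) (U2 q2)" using npI'[of I1 I2 q1 q2] ne pq1 pq2 by auto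
      show "det2 (U2 p1) (U2 p2) \<noteq> 0" "det2 (U2 p3) (U2 q2) \<noteq> 0" "det2 (U2 q1) (U2 q3) \<noteq> 0"
        "det2 (U2 p1) (U2 p3) \<noteq> 0" "det2 (U2 p2) (U2 q3) \<noteq> 0" "det2 (U2 q1) (U2 q2) \<noteq> 0"
        using npar_det[OF a] npar_det[OF b] npar_det[OF c] npar_det[OF d] npar_det[OF e] npar_det[OF f]
          U2nz in6 by auto
    qed
    show "cone2 (PhiU U1) (PhiU U2) \<inter> Phi_image = ray_of (PhiU U1) \<union> ray_of (PhiU U2)"
    proof
      show "cone2 (PhiU U1) (PhiU U2) \<inter> Phi_image \<subseteq> ray_of (PhiU U1) \<union> ray_of (PhiU U2)"
      proof
        fix z assume zi: "z \<in> cone2 (PhiU U1) (PhiU U2) \<inter> Phi_image"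
        then obtain a b where ab: "a \<ge> 0" "b \<ge> 0" and z: "z = (\<lambda>P. a * PhiU U1 P + b * PhiU U2 P)"
          unfolding cone2_def by auto
        show "z \<in> ray_of (PhiU U1) \<union> ray_of (PhiU U2)"
        proof (cases "a = 0")
          case True
          then have "z = (\<lambda>P. b * PhiU U2 P)" using z by simp
          then show ?thesis using ab unfolding ray_of_def by blast
        next
          case a0: False
          show ?thesis
          proof (cases "b = 0")
            case True
            then have "z = (\<lambda>P. a * PhiU U1 P)" using z by simp
            then show ?thesis using ab unfolding ray_of_def by blast
          next
            case False
            have ap: "a > 0" and bp: "b > 0" using a0 False ab by auto
            have zim: "(\<lambda>P. a * PhiU U1 P + b * PhiU U2 P) \<in> Phi_image" using zi z by simp
            have False by (rule neg_core[OF dist cov x0 x1 y1 y2 ap bp zim])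
            then show ?thesis ..
          qed
        qed
      qed
    next
      show "ray_of (PhiU U1) \<union> ray_of (PhiU U2) \<subseteq> cone2 (PhiU U1) (PhiU U2) \<inter> Phi_image"
      proof
        fix z assume zr: "z \<in> ray_of (PhiU U1) \<union> ray_of (PhiU U2)"
        have "z \<in> Phi_image" using zr
        proof (elim UnE)
          assume "z \<in> ray_of (PhiU U1)" then show ?thesis by (rule subsetD[OF ray_in])
        next
          assume "z \<in> ray_of (PhiU U2)" then show ?thesis by (rule subsetD[OF ray_in])
        qed
        moreover have "z \<in> cone2 (PhiU U1) (PhiU U2)"
        proof -
          from zr show ?thesis
          proof (elim UnE)
            assume "z \<in> ray_of (PhiU U1)"
            then obtain t where t: "t \<ge> 0" "z = (\<lambda>P. t * PhiU U1 P)" unfolding ray_of_def by auto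
            have "z = (\<lambda>P. t * PhiU U1 P + 0 * PhiU U2 P)" using t by simp
            then show ?thesis unfolding cone2_def using t(1) by (intro CollectI exI[of _ t] exI[of _ 0]) simp
          next
            assume "z \<in> ray_of (PhiU U2)"
            then obtain t where t: "t \<ge> 0" "z = (\<lambda>P. t * PhiU U2 P)" unfolding ray_of_def by auto
            have "z = (\<lambda>P. 0 * PhiU U1 P + t * PhiU U2 P)" using t by simp
            then show ?thesis unfolding cone2_def using t(1) by (intro CollectI exI[of _ 0] exI[of _ t]) simp
          qed
        qed
        ultimately show "z \<in> cone2 (PhiU U1) (PhiU U2) \<inter> Phi_image" by (rule IntI[rotated])
      qed
    qed
  qed
  show ?thesis using P1 P2 by (rule conjI)
qed

end
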